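(* Let $(V,\mathcal{F})$ be a set system which is the split graph vertex shelling antimatroid of some split graph with vertex set $V$, and suppose $\mathcal{F}\neq 2^V$. Then there is a unique graph $G=(V,E)$ which is a split graph and whose split graph vertex shelling antimatroid is $(V,\mathcal{F})$.
   Context: A split graph is a finite simple graph whose vertex set can be partitioned into a clique $K$ and an independent set $I$. A vertex is simplicial if its neighbours induce a clique. The split graph vertex shelling antimatroid of a split graph $G$ on $V$ is $(V,\mathcal{F})$ where $F\subseteq V$ is feasible iff there is an ordering $f_1,\dots,f_{|F|}$ of $F$ such that each $f_j$ is simplicial in $G$ minus $\{f_1,\dots,f_{j-1}\}$ (the empty set is feasible); this family does not depend on the choice of the partition. $2^V$ denotes the family of all subsets of $V$. *)

theory Defs
  imports Main
begin

definition simple_graph :: "'a set \<Rightarrow> 'a set set \<Rightarrow> bool" where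
  "simple_graph V E \<longleftrightarrow> finite V \<and>
     (\<forall>e\<in>E. \<exists>x y. x \<in> V \<and> y \<in> V \<and> x \<noteq> y \<and> e = {x, y})"

definition adj :: "'a set set \<Rightarrow> 'a \<Rightarrow> 'a \<Rightarrow> bool" where
  "adj E x y \<longleftrightarrow> {x, y} \<in> E"

definition is_clique :: "'a set set \<Rightarrow> 'a set \<Rightarrow> bool" where
  "is_clique E K \<longleftrightarrow> (\<forall>x\<in>K. \<forall>y\<in>K. x \<noteq> y \<longrightarrow> adj E x y)"

definition is_indep :: "'a set set \<Rightarrow> 'a set \<Rightarrow> bool" where
  "is_indep E I \<longleftrightarrow> (\<forall>x\<in>I. \<forall>y\<in>I. \<not> adj E x y)"

definition split_graph :: "'a set \<Rightarrow> 'a set set \<Rightarrow> bool" where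
  "split_graph V E \<longleftrightarrow> simple_graph V E \<and>
     (\<exists>K I. K \<union> I = V \<and> K \<inter> I = {} \<and> is_clique E K \<and> is_indep E I)"

definition simplicial_in :: "'a set \<Rightarrow> 'a set set \<Rightarrow> 'a \<Rightarrow> bool" where
  "simplicial_in W E v \<longleftrightarrow> v \<in> W \<and> is_clique E {u \<in> W. adj E v u}"

definition shelling_feasible :: "'a set \<Rightarrow> 'a set set \<Rightarrow> 'a set \<Rightarrow> bool" where
  "shelling_feasible V E F \<longleftrightarrow> (\<exists>xs. distinct xs \<and> set xs = F \<and>
     (\<forall>j < length xs. simplicial_in (V - set (take j xs)) E (xs ! j)))"

definition vertex_shelling :: "'a set \<Rightarrow> 'a set set \<Rightarrow> 'a set set" where
  "vertex_shelling V E = {F. shelling_feasible V E F}"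

end

theory Submission imports Defs begin

lemma adj_sym: "adj E x y = adj E y x"
  unfolding adj_def by (simp add: insert_commute)

lemma adj_irr: "simple_graph V E \<Longrightarrow> \<not> adj E x x"
  unfolding simple_graph_def adj_def by fastforce

lemma adj_V: "simple_graph V E \<Longrightarrow> adj E x y \<Longrightarrow> x \<in> V \<and> y \<in> V"
proof -
  assume "simple_graph V E" "adj E x y"
  then obtain a b where "a \<in> V" "b \<in> V" "{x,y} = {a,b}" unfolding simple_graph_def adj_def by blast
  then show ?thesis by (auto simp: doubleton_eq_iff)
qed


lemma nth_notin_take2: "distinct xs \<Longrightarrow> i \<le> j \<Longrightarrow> j < length xs \<Longrightarrow> xs ! j \<notin> set (take i xs)"
proof
  assume d: "distinct xs" and ij: "i \<le> j" "j < length xs" and m: "xs ! j \<in> set (take i xs)"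
  then obtain k where k: "k < length (take i xs)" "take i xs ! k = xs ! j" by (auto simp: in_set_conv_nth)
  then have "k < i" "xs ! k = xs ! j" by auto
  then have "k = j" using d ij nth_eq_iff_index_eq[of xs k j] by simp
  then show False using \<open>k < i\<close> ij by simp
qed

lemma reach_aux:
  assumes "finite W" "T \<subseteq> W" "\<forall>W'. T \<subset> W' \<and> W' \<subseteq> W \<longrightarrow> (\<exists>s\<in>W'-T. simplicial_in W' E s)"
  shows "\<exists>xs. distinct xs \<and> set xs = W - T \<and> (\<forall>j<length xs. simplicial_in (W - set (take j xs)) E (xs!j))"
  using assms
proof (induction "card (W - T)" arbitrary: W)
  case 0
  then have "W - T = {}" by auto
  then show ?case by (intro exI[of _ "[]"]) auto
next
  case (Suc n)
  then have "T \<subset> W" by auto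
  with Suc.prems obtain s where s: "s \<in> W - T" "simplicial_in W E s" by blast
  have "\<exists>ys. distinct ys \<and> set ys = (W - {s}) - T \<and> (\<forall>j<length ys. simplicial_in ((W - {s}) - set (take j ys)) E (ys!j))"
    apply (rule Suc.hyps(1))
    using Suc.prems Suc.hyps(2) s by (auto simp: card_Diff_singleton Diff_insert2[symmetric])
  then obtain ys where ys: "distinct ys" "set ys = (W - {s}) - T" "\<forall>j<length ys. simplicial_in ((W - {s}) - set (take j ys)) E (ys!j)" by blast
  show ?case
  proof (intro exI[of _ "s # ys"] conjI allI impI)
    show "distinct (s # ys)" using ys s by auto
    show "set (s # ys) = W - T" using ys s by auto
    fix j assume j: "j < length (s # ys)"
    show "simplicial_in (W - set (take j (s # ys))) E ((s # ys) ! j)"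
    proof (cases j)
      case 0 then show ?thesis using s by simp
    next
      case (Suc k)
      then have "W - set (take j (s # ys)) = (W - {s}) - set (take k ys)" by auto
      then show ?thesis using ys(3) j Suc by simp
    qed
  qed
qed

lemma reach:
  assumes "finite V" "T \<subseteq> V" "\<forall>W. T \<subset> W \<and> W \<subseteq> V \<longrightarrow> (\<exists>s\<in>W-T. simplicial_in W E s)"
  shows "shelling_feasible V E (V - T)"
  using reach_aux[OF assms] unfolding shelling_feasible_def by blast


lemma single_feasible: "v \<in> V \<Longrightarrow> simplicial_in V E v \<Longrightarrow> {v} \<in> vertex_shelling V E"
  unfolding vertex_shelling_def shelling_feasible_def by (intro CollectI exI[of _ "[v]"]) auto

lemma feasible_single: "{v} \<in> vertex_shelling V E \<Longrightarrow> simplicial_in V E v"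
proof -
  assume "{v} \<in> vertex_shelling V E"
  then obtain xs where xs: "distinct xs" "set xs = {v}" "\<forall>j<length xs. simplicial_in (V - set (take j xs)) E (xs ! j)"
    unfolding vertex_shelling_def shelling_feasible_def by blast
  then have "length xs = 1" using distinct_card[of xs] by simp
  then obtain w where "xs = [w]" by (cases xs) auto
  with xs show ?thesis by auto
qed

lemma simp_clique: "simplicial_in W E b \<Longrightarrow> a \<in> W \<Longrightarrow> c \<in> W \<Longrightarrow> adj E b a \<Longrightarrow> adj E b c \<Longrightarrow> a \<noteq> c \<Longrightarrow> adj E a c"
  unfolding simplicial_in_def is_clique_def by blast

lemma LC2:
  assumes sg: "simple_graph V E" and "u \<noteq> v" "adj E u k" "adj E k v" "\<not> adj E u v"
  shows "V - {u, v} \<notin> vertex_shelling V E"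
proof
  assume "V - {u, v} \<in> vertex_shelling V E"
  then obtain xs where xs: "distinct xs" "set xs = V - {u,v}" "\<forall>j<length xs. simplicial_in (V - set (take j xs)) E (xs ! j)"
    unfolding vertex_shelling_def shelling_feasible_def by blast
  have "k \<in> V" "u \<in> V" "v \<in> V" using adj_V[OF sg] assms by blast+
  moreover have "k \<noteq> u" "k \<noteq> v" using adj_irr[OF sg] assms by blast+
  ultimately have "k \<in> set xs" using xs by auto
  then obtain j where j: "j < length xs" "xs ! j = k" by (auto simp: in_set_conv_nth)
  have "u \<notin> set (take j xs)" "v \<notin> set (take j xs)" using xs(2) set_take_subset[of j xs] by auto
  then have "u \<in> V - set (take j xs)" "v \<in> V - set (take j xs)" using \<open>u \<in> V\<close> \<open>v \<in> V\<close> by auto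
  moreover have "simplicial_in (V - set (take j xs)) E k" using xs(3) j by auto
  ultimately have "adj E u v" using simp_clique assms adj_sym by metis
  then show False using assms by simp
qed

lemma LC3:
  assumes sg: "simple_graph V E" and "u \<noteq> v" "adj E u k1" "adj E k1 k2" "adj E k2 v"
    "\<not> adj E u k2" "\<not> adj E k1 v" "\<not> adj E u v"
  shows "V - {u, v} \<notin> vertex_shelling V E"
proof
  assume "V - {u, v} \<in> vertex_shelling V E"
  then obtain xs where xs: "distinct xs" "set xs = V - {u,v}" "\<forall>j<length xs. simplicial_in (V - set (take j xs)) E (xs ! j)"
    unfolding vertex_shelling_def shelling_feasible_def by blast
  have V: "k1 \<in> V" "k2 \<in> V" "u \<in> V" "v \<in> V" using adj_V[OF sg] assms by blast+
  have ne: "k1 \<noteq> u" "k1 \<noteq> v" "k2 \<noteq> u" "k2 \<noteq> v" "k1 \<noteq> k2" using adj_irr[OF sg] assms by blast+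
  have "k1 \<in> set xs" "k2 \<in> set xs" using xs V ne by auto
  then obtain j1 j2 where j: "j1 < length xs" "xs ! j1 = k1" "j2 < length xs" "xs ! j2 = k2" by (auto simp: in_set_conv_nth)
  have uv: "\<And>j. u \<in> V - set (take j xs)" "\<And>j. v \<in> V - set (take j xs)" using xs(2) set_take_subset V by fastforce+
  have "j1 \<noteq> j2" using j ne by auto
  then consider "j1 < j2" | "j2 < j1" by linarith
  then show False
  proof cases
    case 1
    then have "k2 \<in> V - set (take j1 xs)" using nth_notin_take2[OF xs(1), of j1 j2] j V by auto
    moreover have "simplicial_in (V - set (take j1 xs)) E k1" using xs(3) j by auto
    ultimately have "adj E u k2" using simp_clique[of _ E k1 u k2] uv assms adj_sym ne by metis
    then show False using assms by simp
  next
    case 2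
    then have "k1 \<in> V - set (take j2 xs)" using nth_notin_take2[OF xs(1), of j2 j1] j V by auto
    moreover have "simplicial_in (V - set (take j2 xs)) E k2" using xs(3) j by auto
    ultimately have "adj E k1 v" using simp_clique[of _ E k2 k1 v] uv assms adj_sym ne by metis
    then show False using assms by simp
  qed
qed


lemma L_trans:
  assumes sg: "simple_graph V E" and tr: "\<forall>a b c. adj E a b \<longrightarrow> adj E b c \<longrightarrow> a \<noteq> c \<longrightarrow> adj E a c"
  shows "vertex_shelling V E = Pow V"
proof
  show "vertex_shelling V E \<subseteq> Pow V"
  proof
    fix F assume "F \<in> vertex_shelling V E"
    then obtain xs where xs: "distinct xs" "set xs = F" "\<forall>j<length xs. simplicial_in (V - set (take j xs)) E (xs ! j)"
      unfolding vertex_shelling_def shelling_feasible_def by blast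
    have "\<forall>x\<in>F. x \<in> V"
    proof
      fix x assume "x \<in> F"
      then obtain j where "j < length xs" "xs ! j = x" using xs(2) by (auto simp: in_set_conv_nth)
      then show "x \<in> V" using xs(3) unfolding simplicial_in_def by auto
    qed
    then show "F \<in> Pow V" by auto
  qed
  show "Pow V \<subseteq> vertex_shelling V E"
  proof
    fix F assume "F \<in> Pow V"
    then have "F \<subseteq> V" by auto
    moreover have "finite V" using sg unfolding simple_graph_def by auto
    ultimately have "finite F" using finite_subset by auto
    then obtain xs where xs: "distinct xs" "set xs = F" using finite_distinct_list by blast
    have "\<forall>j<length xs. simplicial_in (V - set (take j xs)) E (xs ! j)"
    proof (intro allI impI)
      fix j assume j: "j < length xs"
      have "xs ! j \<in> V" using j xs \<open>F \<subseteq> V\<close> nth_mem by blast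
      moreover have "xs ! j \<notin> set (take j xs)" using nth_notin_take2[OF xs(1), of j j] j by auto
      moreover have "is_clique E {u \<in> V - set (take j xs). adj E (xs ! j) u}"
        unfolding is_clique_def
      proof (intro ballI impI)
        fix x y assume x: "x \<in> {u \<in> V - set (take j xs). adj E (xs ! j) u}" and y: "y \<in> {u \<in> V - set (take j xs). adj E (xs ! j) u}" and "x \<noteq> y"
        then have "adj E x (xs ! j)" "adj E (xs ! j) y" using adj_sym[of E x "xs ! j"] by auto
        then show "adj E x y" using tr \<open>x \<noteq> y\<close> by blast
      qed
      ultimately show "simplicial_in (V - set (take j xs)) E (xs ! j)" unfolding simplicial_in_def by auto
    qed
    then show "F \<in> vertex_shelling V E" unfolding vertex_shelling_def shelling_feasible_def using xs by blast
  qed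
qed

lemma L_cliqueT:
  assumes sp: "split_graph V E" and T: "T \<subseteq> V" and cl: "is_clique E (T - {x. \<forall>y. \<not> adj E x y})"
  shows "V - T \<in> vertex_shelling V E"
proof -
  have sg: "simple_graph V E" using sp unfolding split_graph_def by auto
  obtain K I where KI: "K \<union> I = V" "K \<inter> I = {}" "is_clique E K" "is_indep E I"
    using sp unfolding split_graph_def by auto
  have nbI: "\<And>w y. w \<in> I \<Longrightarrow> adj E w y \<Longrightarrow> y \<in> K"
    using KI adj_V[OF sg] unfolding is_indep_def by blast
  have Kadj: "\<And>x y. x \<in> K \<Longrightarrow> y \<in> K \<Longrightarrow> x \<noteq> y \<Longrightarrow> adj E x y"
    using KI unfolding is_clique_def by blast
  have Ind: "\<And>x y. x \<in> I \<Longrightarrow> y \<in> I \<Longrightarrow> \<not> adj E x y"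
    using KI unfolding is_indep_def by blast
  have Tcl: "\<And>x y. x \<in> T \<Longrightarrow> y \<in> T \<Longrightarrow> x \<noteq> y \<Longrightarrow> \<exists>z. adj E x z \<Longrightarrow> \<exists>z. adj E y z \<Longrightarrow> adj E x y"
    using cl unfolding is_clique_def by blast
  have uniq: "\<And>y y' a a'. y \<in> T \<Longrightarrow> y' \<in> T \<Longrightarrow> y \<in> I \<Longrightarrow> y' \<in> I \<Longrightarrow> adj E y a \<Longrightarrow> adj E y' a' \<Longrightarrow> y = y'"
    using Tcl Ind by blast
  have "\<forall>W. T \<subset> W \<and> W \<subseteq> V \<longrightarrow> (\<exists>s\<in>W-T. simplicial_in W E s)"
  proof (intro allI impI)
    fix W assume W: "T \<subset> W \<and> W \<subseteq> V"
    show "\<exists>s\<in>W-T. simplicial_in W E s"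
    proof (cases "\<exists>w\<in>W-T. w \<in> I")
      case True
      then obtain w where w: "w \<in> W - T" "w \<in> I" by blast
      have "is_clique E {u \<in> W. adj E w u}" unfolding is_clique_def using nbI[OF w(2)] Kadj by blast
      then show ?thesis using w unfolding simplicial_in_def by blast
    next
      case False
      then have WK: "W - T \<subseteq> K" using W KI by blast
      show ?thesis
      proof (cases "\<exists>w\<in>W-T. \<forall>y\<in>W. adj E w y \<longrightarrow> y \<in> K")
        case True
        then obtain w where w: "w \<in> W - T" "\<forall>y\<in>W. adj E w y \<longrightarrow> y \<in> K" by blast
        have "is_clique E {u \<in> W. adj E w u}" unfolding is_clique_def using w(2) Kadj by blast
        then show ?thesis using w unfolding simplicial_in_def by blast
      next
        case False
        then have nb: "\<forall>w\<in>W-T. \<exists>y\<in>W. adj E w y \<and> y \<notin> K" by blast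
        obtain w0 where w0: "w0 \<in> W - T" using W by blast
        then obtain y0 where y0: "y0 \<in> W" "adj E w0 y0" "y0 \<notin> K" using nb by blast
        have y0I: "y0 \<in> I" "y0 \<in> T" using y0 W KI WK by blast+
        have allY: "\<forall>w\<in>W-T. adj E w y0"
        proof
          fix w assume w: "w \<in> W - T"
          then obtain y where y: "y \<in> W" "adj E w y" "y \<notin> K" using nb by blast
          then have "y \<in> I" "y \<in> T" using W KI WK by blast+
          then have "y = y0" using uniq[of y y0 w w0] y0I y y0 adj_sym[of E w y] adj_sym[of E w0 y0] by simp
          then show "adj E w y0" using y by simp
        qed
        have "is_clique E {u \<in> W. adj E w0 u}"
          unfolding is_clique_def
        proof (intro ballI impI)
          fix x z assume x: "x \<in> {u \<in> W. adj E w0 u}" and z: "z \<in> {u \<in> W. adj E w0 u}" and xz: "x \<noteq> z"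
          have yy: "\<And>a. a \<in> W \<Longrightarrow> adj E w0 a \<Longrightarrow> a \<notin> K \<Longrightarrow> a = y0"
          proof -
            fix a assume a: "a \<in> W" "adj E w0 a" "a \<notin> K"
            then have "a \<in> I" "a \<in> T" using W KI WK by blast+
            then show "a = y0" using uniq[of a y0 w0 w0] y0I a y0 adj_sym[of E w0 a] adj_sym[of E w0 y0] by simp
          qed
          have aux: "\<And>a. a \<in> W \<Longrightarrow> adj E w0 a \<Longrightarrow> a \<noteq> y0 \<Longrightarrow> adj E a y0"
          proof -
            fix a assume a: "a \<in> W" "adj E w0 a" "a \<noteq> y0"
            show "adj E a y0"
            proof (cases "a \<in> T")
              case True
              have "adj E a w0" "adj E y0 w0" using a(2) y0(2) adj_sym[of E a w0] adj_sym[of E y0 w0] by auto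
              then show ?thesis using Tcl[of a y0] y0I True a(3) by blast
            next
              case False
              then show ?thesis using allY a by blast
            qed
          qed
          show "adj E x z"
          proof (cases "x \<in> K \<and> z \<in> K")
            case True then show ?thesis using Kadj xz by blast
          next
            case False
            then have "x = y0 \<or> z = y0" using yy x z by blast
            then show ?thesis
            proof
              assume "x = y0" then show ?thesis using aux[of z] x z xz adj_sym[of E z y0] by auto
            next
              assume "z = y0" then show ?thesis using aux[of x] x z xz by auto
            qed
          qed
        qed
        then show ?thesis using w0 W unfolding simplicial_in_def by blast
      qed
    qed
  qed
  moreover have "finite V" using sg unfolding simple_graph_def by auto
  ultimately show ?thesis using reach[OF _ T] unfolding vertex_shelling_def by blast
qed


definition Nf :: "'a set set \<Rightarrow> 'a set \<Rightarrow> 'a \<Rightarrow> bool" where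
  "Nf F V v \<longleftrightarrow> (\<exists>x\<in>V. V - {v, x} \<notin> F) \<or> {v} \<notin> F"

lemma split_parts:
  assumes "split_graph V E"
  obtains K I where "K \<union> I = V" "K \<inter> I = {}"
    "\<And>x y. x \<in> K \<Longrightarrow> y \<in> K \<Longrightarrow> x \<noteq> y \<Longrightarrow> adj E x y"
    "\<And>x y. x \<in> I \<Longrightarrow> y \<in> I \<Longrightarrow> \<not> adj E x y"
    "\<And>w y. w \<in> I \<Longrightarrow> adj E w y \<Longrightarrow> y \<in> K"
proof -
  have sg: "simple_graph V E" using assms unfolding split_graph_def by auto
  obtain K I where KI: "K \<union> I = V" "K \<inter> I = {}" "is_clique E K" "is_indep E I"
    using assms unfolding split_graph_def by auto
  show ?thesis
  proof (rule that[of K I])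
    show "K \<union> I = V" "K \<inter> I = {}" using KI by auto
    show "\<And>x y. x \<in> K \<Longrightarrow> y \<in> K \<Longrightarrow> x \<noteq> y \<Longrightarrow> adj E x y"
      using KI(3) unfolding is_clique_def by blast
    show I: "\<And>x y. x \<in> I \<Longrightarrow> y \<in> I \<Longrightarrow> \<not> adj E x y"
      using KI(4) unfolding is_indep_def by blast
    fix w y assume "w \<in> I" "adj E w y"
    moreover have "y \<in> V" using adj_V[OF sg \<open>adj E w y\<close>] by blast
    ultimately show "y \<in> K" using I KI(1) by blast
  qed
qed

lemma iso_notN:
  assumes sp: "split_graph V E" and v: "v \<in> V" and iso: "\<forall>y. \<not> adj E v y"
  shows "\<not> Nf (vertex_shelling V E) V v"
proof -
  have e: "{u \<in> V. adj E v u} = {}" using iso by blast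
  have "is_clique E {}" unfolding is_clique_def by simp
  then have "simplicial_in V E v" using v unfolding simplicial_in_def e by simp
  then have 1: "{v} \<in> vertex_shelling V E" by (rule single_feasible[OF v])
  have "\<forall>x\<in>V. V - {v, x} \<in> vertex_shelling V E"
  proof
    fix x assume x: "x \<in> V"
    have "{v, x} - {z. \<forall>y. \<not> adj E z y} \<subseteq> {x}" using iso by auto
    then have "is_clique E ({v, x} - {z. \<forall>y. \<not> adj E z y})" unfolding is_clique_def by blast
    moreover have "{v, x} \<subseteq> V" using x v by simp
    ultimately show "V - {v, x} \<in> vertex_shelling V E" using L_cliqueT[OF sp] by blast
  qed
  then show ?thesis using 1 unfolding Nf_def by blast
qed

lemma P3:
  assumes sp: "split_graph V E" and ne: "vertex_shelling V E \<noteq> Pow V"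
  shows "\<exists>a b c. adj E a b \<and> adj E b c \<and> a \<noteq> c \<and> \<not> adj E a c"
proof (rule ccontr)
  assume "\<not> (\<exists>a b c. adj E a b \<and> adj E b c \<and> a \<noteq> c \<and> \<not> adj E a c)"
  then have "\<forall>a b c. adj E a b \<longrightarrow> adj E b c \<longrightarrow> a \<noteq> c \<longrightarrow> adj E a c" by blast
  moreover have "simple_graph V E" using sp unfolding split_graph_def by auto
  ultimately show False using L_trans ne by blast
qed

lemma N_of_adj:
  assumes sp: "split_graph V E" and ne: "vertex_shelling V E \<noteq> Pow V" and uw: "adj E u w"
  shows "Nf (vertex_shelling V E) V u"
proof (rule ccontr)
  assume nN: "\<not> Nf (vertex_shelling V E) V u"
  have sg: "simple_graph V E" using sp unfolding split_graph_def by auto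
  have allP: "\<forall>x\<in>V. V - {u, x} \<in> vertex_shelling V E" and "{u} \<in> vertex_shelling V E"
    using nN unfolding Nf_def by auto
  have su: "simplicial_in V E u" by (rule feasible_single[OF \<open>{u} \<in> vertex_shelling V E\<close>])
  obtain a b c where abc: "adj E a b" "adj E b c" "a \<noteq> c" "\<not> adj E a c" using P3[OF sp ne] by blast
  obtain K I where KI: "K \<union> I = V" "K \<inter> I = {}"
    and Kadj: "\<And>x y. x \<in> K \<Longrightarrow> y \<in> K \<Longrightarrow> x \<noteq> y \<Longrightarrow> adj E x y"
    and Ind: "\<And>x y. x \<in> I \<Longrightarrow> y \<in> I \<Longrightarrow> \<not> adj E x y"
    and nbI: "\<And>w y. w \<in> I \<Longrightarrow> adj E w y \<Longrightarrow> y \<in> K"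
    by (rule split_parts[OF sp]) blast
  have V: "a \<in> V" "b \<in> V" "c \<in> V" "u \<in> V" "w \<in> V" using adj_V[OF sg] abc uw by blast+
  have ba: "adj E b a" using abc adj_sym[of E a b] by simp
  have bK: "b \<in> K"
  proof (rule ccontr)
    assume "b \<notin> K"
    then have "b \<in> I" using KI V by blast
    then have "a \<in> K" "c \<in> K" using nbI ba abc by blast+
    then show False using Kadj abc by blast
  qed
  have L: "\<And>x k. x \<in> V \<Longrightarrow> u \<noteq> x \<Longrightarrow> adj E u k \<Longrightarrow> adj E k x \<Longrightarrow> \<not> adj E u x \<Longrightarrow> False"
  proof -
    fix x k assume h: "x \<in> V" "u \<noteq> x" "adj E u k" "adj E k x" "\<not> adj E u x"
    have "V - {u, x} \<notin> vertex_shelling V E" by (rule LC2[OF sg h(2-5)])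
    then show False using allP h(1) by blast
  qed
  have clq: "\<And>x y. x \<in> V \<Longrightarrow> y \<in> V \<Longrightarrow> adj E u x \<Longrightarrow> adj E u y \<Longrightarrow> x \<noteq> y \<Longrightarrow> adj E x y"
    using simp_clique[OF su] by blast
  show False
  proof (cases "u = b")
    case True then show ?thesis using clq[of a c] V ba abc by blast
  next
    case ub: False
    show ?thesis
    proof (cases "adj E u b")
      case True
      show ?thesis
      proof (cases "u = a")
        case True then show ?thesis using L[of c b] V abc \<open>adj E u b\<close> by blast
      next
        case ua: False
        show ?thesis
        proof (cases "u = c")
          case True
          have "\<not> adj E c a" using abc adj_sym[of E c a] by simp
          then show ?thesis using L[of a b] V abc ba \<open>adj E u b\<close> True by blast
        next
          case uc: False
          show ?thesis
          proof (cases "adj E u a")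
            case False then show ?thesis using L[of a b] V ba \<open>adj E u b\<close> ua by blast
          next
            case ua': True
            show ?thesis
            proof (cases "adj E u c")
              case False then show ?thesis using L[of c b] V abc \<open>adj E u b\<close> uc by blast
            next
              case True then show ?thesis using clq[of a c] V abc ua' by blast
            qed
          qed
        qed
      qed
    next
      case nub: False
      have "u \<notin> K" using Kadj bK ub nub by blast
      then have "u \<in> I" using KI V by blast
      then have "w \<in> K" using nbI uw by blast
      moreover have "w \<noteq> b" using nub uw by blast
      ultimately have "adj E w b" using Kadj bK by blast
      then show False using L[of b w] V uw ub nub by blast
    qed
  qed
qed

lemma char:
  assumes sp: "split_graph V E" and ne: "vertex_shelling V E \<noteq> Pow V"
    and uv: "u \<in> V" "v \<in> V" "u \<noteq> v"
  shows "adj E u v \<longleftrightarrow> (Nf (vertex_shelling V E) V u \<and> Nf (vertex_shelling V E) V v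
            \<and> V - {u, v} \<in> vertex_shelling V E)"
proof
  have sg: "simple_graph V E" using sp unfolding split_graph_def by auto
  assume a: "adj E u v"
  have "is_clique E ({u, v} - {x. \<forall>y. \<not> adj E x y})"
    using a adj_sym[of E u v] unfolding is_clique_def by blast
  moreover have "{u, v} \<subseteq> V" using uv by simp
  ultimately have "V - {u, v} \<in> vertex_shelling V E" using L_cliqueT[OF sp] by blast
  moreover have "adj E v u" using a adj_sym[of E u v] by simp
  ultimately show "Nf (vertex_shelling V E) V u \<and> Nf (vertex_shelling V E) V v
            \<and> V - {u, v} \<in> vertex_shelling V E" using N_of_adj[OF sp ne] a by blast
next
  have sg: "simple_graph V E" using sp unfolding split_graph_def by auto
  assume h: "Nf (vertex_shelling V E) V u \<and> Nf (vertex_shelling V E) V v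
            \<and> V - {u, v} \<in> vertex_shelling V E"
  show "adj E u v"
  proof (rule ccontr)
    assume nuv: "\<not> adj E u v"
    have nvu: "\<not> adj E v u" using nuv adj_sym[of E v u] by simp
    obtain u' where u': "adj E u u'" using iso_notN[OF sp uv(1)] h by blast
    obtain v' where v': "adj E v v'" using iso_notN[OF sp uv(2)] h by blast
    have v'': "adj E v' v" using v' adj_sym[of E v v'] by simp
    have P: "V - {u, v} \<in> vertex_shelling V E" using h by blast
    obtain K I where KI: "K \<union> I = V" "K \<inter> I = {}"
      and Kadj: "\<And>x y. x \<in> K \<Longrightarrow> y \<in> K \<Longrightarrow> x \<noteq> y \<Longrightarrow> adj E x y"
      and Ind: "\<And>x y. x \<in> I \<Longrightarrow> y \<in> I \<Longrightarrow> \<not> adj E x y"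
      and nbI: "\<And>w y. w \<in> I \<Longrightarrow> adj E w y \<Longrightarrow> y \<in> K"
      by (rule split_parts[OF sp]) blast
    have L2: "\<And>k. adj E u k \<Longrightarrow> adj E k v \<Longrightarrow> False"
    proof -
      fix k assume "adj E u k" "adj E k v"
      then have "V - {u, v} \<notin> vertex_shelling V E" by (rule LC2[OF sg uv(3) _ _ nuv])
      then show False using P by blast
    qed
    show False
    proof (cases "u \<in> K")
      case True
      then have "v \<in> I" using Kadj uv nuv KI by blast
      then have "v' \<in> K" using nbI v' by blast
      moreover have "v' \<noteq> u" using v' nvu by blast
      ultimately show False using L2[of v'] Kadj True v'' by blast
    next
      case uK: False
      then have uI: "u \<in> I" using KI uv by blast
      then have u'K: "u' \<in> K" using nbI u' by blast
      show False
      proof (cases "v \<in> K")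
        case True
        moreover have "u' \<noteq> v" using u' nuv by blast
        ultimately show False using L2[of u'] Kadj u' u'K by blast
      next
        case False
        then have "v \<in> I" using KI uv by blast
        then have v'K: "v' \<in> K" using nbI v' by blast
        show False
        proof (cases "u' = v'")
          case True then show False using L2[of u'] u' v'' by blast
        next
          case ne': False
          show False
          proof (cases "adj E u' v")
            case True then show False using L2[of u'] u' by blast
          next
            case n1: False
            show False
            proof (cases "adj E u v'")
              case True then show False using L2[of v'] v'' by blast
            next
              case n2: False
              have "adj E u' v'" using Kadj u'K v'K ne' by blast
              then have "V - {u, v} \<notin> vertex_shelling V E" by (rule LC3[OF sg uv(3) u' _ v'' n2 n1 nuv])
              then show False using P by blast
            qed
          qed
        qed
      qed
    qed
  qed
qed

lemma E_sub:
  assumes sp1: "split_graph V E1" and sp2: "split_graph V E2"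
    and eq: "vertex_shelling V E1 = vertex_shelling V E2" and ne: "vertex_shelling V E1 \<noteq> Pow V"
  shows "E1 \<subseteq> E2"
proof
  fix e assume e: "e \<in> E1"
  then obtain x y where xy: "x \<in> V" "y \<in> V" "x \<noteq> y" "e = {x, y}"
    using sp1 unfolding split_graph_def simple_graph_def by blast
  then have "adj E1 x y" using e unfolding adj_def by simp
  then have "adj E2 x y" using char[OF sp1 ne xy(1-3)] char[OF sp2 _ xy(1-3)] eq ne by simp
  then show "e \<in> E2" using xy unfolding adj_def by simp
qed

theorem mainTheorem5:
  fixes V :: "'a set" and \<F> :: "'a set set"
  assumes "\<exists>E. split_graph V E \<and> vertex_shelling V E = \<F>"
    and "\<F> \<noteq> Pow V"
  shows "\<exists>!E. split_graph V E \<and> vertex_shelling V E = \<F>"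
proof -
  obtain E0 where E0: "split_graph V E0" "vertex_shelling V E0 = \<F>" using assms(1) by blast
  show ?thesis
  proof (rule ex1I[of _ E0])
    show "split_graph V E0 \<and> vertex_shelling V E0 = \<F>" using E0 by blast
    fix E assume E: "split_graph V E \<and> vertex_shelling V E = \<F>"
    show "E = E0"
      using E_sub[of V E E0] E_sub[of V E0 E] E E0 assms(2) by auto
  qed
qed

end
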